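(* For any $n\ge0$, $$\mathbb E(\widehat p_n)<\widehat P_n\quad\text{and}\quad\mathbb E(p_{n+1})<P_{n+1}.$$
   Context: Model: nonzero reals $A,B,C,D$, $R:=B^2$; $(V_n),(W_n)$ i.i.d. $N(0,1)$, $X_0\sim N(\widehat X_0^-,P_0)$ ($P_0>0$) independent, $X_{n+1}=AX_n+BW_{n+1}$, $Y_n=CX_n+DV_n$. Kalman variances: $G_n:=CP_n/(C^2P_n+D^2)$, $\widehat P_n:=(1-G_nC)P_n$, $P_{n+1}:=A^2\widehat P_n+R$. EnKF with $N+1$ particles ($N\ge1$): $\xi^i_0$ i.i.d. copies of $X_0$; independent i.i.d. $N(0,1)$ families $(V^i_n),(W^i_n)$ independent of the model; $m_n$ sample mean, $p_n:=\frac1N\sum_{i=1}^{N+1}(\xi^i_n-m_n)^2$, $g_n:=Cp_n/(C^2p_n+D^2)$, $\widehat\xi^i_n:=\xi^i_n+g_n(Y_n-C\xi^i_n-DV^i_n)$, with sample mean $\widehat m_n$ and $\widehat p_n:=\frac1N\sum_i(\widehat\xi^i_n-\widehat m_n)^2$, $\xi^i_{n+1}:=A\widehat\xi^i_n+BW^i_{n+1}$. *)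

theory Defs
  imports "HOL-Probability.Probability"
begin

text \<open>Particles are indexed by i in {0..N} (i.e. N+1 particles).\<close>

definition smean :: "nat \<Rightarrow> (nat \<Rightarrow> real) \<Rightarrow> real" where
  "smean N x = (\<Sum>i\<le>N. x i) / real (N + 1)"

definition svar :: "nat \<Rightarrow> (nat \<Rightarrow> real) \<Rightarrow> real" where
  "svar N x = (\<Sum>i\<le>N. (x i - smean N x)^2) / real N"

definition gain :: "real \<Rightarrow> real \<Rightarrow> real \<Rightarrow> real" where
  "gain C D p = C * p / (C^2 * p + D^2)"

primrec kalP :: "real \<Rightarrow> real \<Rightarrow> real \<Rightarrow> real \<Rightarrow> real \<Rightarrow> nat \<Rightarrow> real" where
  "kalP A B C D P0 0 = P0"
| "kalP A B C D P0 (Suc n) =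
     A^2 * ((1 - gain C D (kalP A B C D P0 n) * C) * kalP A B C D P0 n) + B^2"

definition kalPhat :: "real \<Rightarrow> real \<Rightarrow> real \<Rightarrow> real \<Rightarrow> real \<Rightarrow> nat \<Rightarrow> real" where
  "kalPhat A B C D P0 n = (1 - gain C D (kalP A B C D P0 n) * C) * kalP A B C D P0 n"

primrec sigX :: "real \<Rightarrow> real \<Rightarrow> ('a \<Rightarrow> real) \<Rightarrow> (nat \<Rightarrow> 'a \<Rightarrow> real) \<Rightarrow> nat \<Rightarrow> 'a \<Rightarrow> real" where
  "sigX A B X0 W 0 = X0"
| "sigX A B X0 W (Suc n) = (\<lambda>\<omega>. A * sigX A B X0 W n \<omega> + B * W (Suc n) \<omega>)"

definition obsY :: "real \<Rightarrow> real \<Rightarrow> real \<Rightarrow> real \<Rightarrow> ('a \<Rightarrow> real) \<Rightarrow> (nat \<Rightarrow> 'a \<Rightarrow> real)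
    \<Rightarrow> (nat \<Rightarrow> 'a \<Rightarrow> real) \<Rightarrow> nat \<Rightarrow> 'a \<Rightarrow> real" where
  "obsY A B C D X0 W V n \<omega> = C * sigX A B X0 W n \<omega> + D * V n \<omega>"

definition analysis :: "real \<Rightarrow> real \<Rightarrow> nat \<Rightarrow> real \<Rightarrow> (nat \<Rightarrow> real) \<Rightarrow> (nat \<Rightarrow> real) \<Rightarrow> nat \<Rightarrow> real" where
  "analysis C D N y v x = (\<lambda>i. x i + gain C D (svar N x) * (y - C * x i - D * v i))"

text \<open>EnKF forecast particles xi^i_n(omega) = enkf ... n omega i.
  Vp i n = V^i_n, Wp i n = W^i_n, xi0 i = xi^i_0.\<close>
primrec enkf :: "real \<Rightarrow> real \<Rightarrow> real \<Rightarrow> real \<Rightarrow> nat \<Rightarrow> ('a \<Rightarrow> real) \<Rightarrow> (nat \<Rightarrow> 'a \<Rightarrow> real)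
    \<Rightarrow> (nat \<Rightarrow> 'a \<Rightarrow> real) \<Rightarrow> (nat \<Rightarrow> 'a \<Rightarrow> real) \<Rightarrow> (nat \<Rightarrow> nat \<Rightarrow> 'a \<Rightarrow> real)
    \<Rightarrow> (nat \<Rightarrow> nat \<Rightarrow> 'a \<Rightarrow> real) \<Rightarrow> nat \<Rightarrow> 'a \<Rightarrow> nat \<Rightarrow> real" where
  "enkf A B C D N X0 W V xi0 Vp Wp 0 = (\<lambda>\<omega> i. xi0 i \<omega>)"
| "enkf A B C D N X0 W V xi0 Vp Wp (Suc n) = (\<lambda>\<omega> i.
     A * analysis C D N (obsY A B C D X0 W V n \<omega>) (\<lambda>j. Vp j n \<omega>)
           (enkf A B C D N X0 W V xi0 Vp Wp n \<omega>) i
     + B * Wp i (Suc n) \<omega>)"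

definition enkf_p where
  "enkf_p A B C D N X0 W V xi0 Vp Wp n \<omega> = svar N (enkf A B C D N X0 W V xi0 Vp Wp n \<omega>)"

definition enkf_phat where
  "enkf_phat A B C D N X0 W V xi0 Vp Wp n \<omega> =
     svar N (analysis C D N (obsY A B C D X0 W V n \<omega>) (\<lambda>j. Vp j n \<omega>)
               (enkf A B C D N X0 W V xi0 Vp Wp n \<omega>))"

text \<open>Labels of all primitive random variables, for stating joint independence.\<close>
datatype rvlabel = LX0 | LW nat | LV nat | LXi nat | LVp nat nat | LWp nat nat

fun rv_of :: "('a \<Rightarrow> real) \<Rightarrow> (nat \<Rightarrow> 'a \<Rightarrow> real) \<Rightarrow> (nat \<Rightarrow> 'a \<Rightarrow> real) \<Rightarrow> (nat \<Rightarrow> 'a \<Rightarrow> real)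
    \<Rightarrow> (nat \<Rightarrow> nat \<Rightarrow> 'a \<Rightarrow> real) \<Rightarrow> (nat \<Rightarrow> nat \<Rightarrow> 'a \<Rightarrow> real) \<Rightarrow> rvlabel \<Rightarrow> 'a \<Rightarrow> real" where
  "rv_of X0 W V xi0 Vp Wp LX0 = X0"
| "rv_of X0 W V xi0 Vp Wp (LW n) = W n"
| "rv_of X0 W V xi0 Vp Wp (LV n) = V n"
| "rv_of X0 W V xi0 Vp Wp (LXi i) = xi0 i"
| "rv_of X0 W V xi0 Vp Wp (LVp i n) = Vp i n"
| "rv_of X0 W V xi0 Vp Wp (LWp i n) = Wp i n"

definition labels :: "nat \<Rightarrow> rvlabel set" where
  "labels N = {LX0} \<union> range LW \<union> range LV \<union> LXi ` {..N}
     \<union> {LVp i n | i n. i \<le> N} \<union> {LWp i n | i n. i \<le> N}"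

end

theory Submission
  imports Defs
begin


lemma svar_nonneg: "svar N x \<ge> 0" by (simp add: svar_def sum_nonneg)

locale ekf = prob_space M for M :: "'a measure" +
  fixes A B C D P0 m0 :: real and N :: nat
    and X0 :: "'a \<Rightarrow> real" and W V xi0 :: "nat \<Rightarrow> 'a \<Rightarrow> real"
    and Vp Wp :: "nat \<Rightarrow> nat \<Rightarrow> 'a \<Rightarrow> real"
  assumes Anz: "A \<noteq> 0" and Bnz: "B \<noteq> 0" and Cnz: "C \<noteq> 0" and Dnz: "D \<noteq> 0"
    and P0pos: "P0 > 0" and N1: "N \<ge> 1"
    and dX0: "distributed M lborel X0 (normal_density m0 (sqrt P0))"
    and dxi0: "\<And>i. i \<le> N \<Longrightarrow> distributed M lborel (xi0 i) (normal_density m0 (sqrt P0))"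
    and dW: "\<And>k. distributed M lborel (W k) std_normal_density"
    and dV: "\<And>k. distributed M lborel (V k) std_normal_density"
    and dWp: "\<And>i k. i \<le> N \<Longrightarrow> distributed M lborel (Wp i k) std_normal_density"
    and dVp: "\<And>i k. i \<le> N \<Longrightarrow> distributed M lborel (Vp i k) std_normal_density"
    and ind: "indep_vars (\<lambda>_. borel) (rv_of X0 W V xi0 Vp Wp) (labels N)"
begin

lemma integrable_cong_sp: "integrable M f \<Longrightarrow> (\<And>x. x\<in>space M \<Longrightarrow> f x = g x) \<Longrightarrow> integrable M g"
  using Bochner_Integration.integrable_cong by metis

abbreviation "rv \<equiv> rv_of X0 W V xi0 Vp Wp"

lemma rv_normal: assumes "l \<in> labels N" shows "\<exists>\<mu> \<sigma>. \<sigma> > 0 \<and> distributed M lborel (rv l) (normal_density \<mu> \<sigma>)"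
proof -
  have s: "sqrt P0 > 0" using P0pos by simp
  show ?thesis
  proof (cases l)
    case LX0 then show ?thesis using dX0 s by (intro exI[of _ m0] exI[of _ "sqrt P0"]) auto
  next
    case (LW k) then show ?thesis using dW[of k] by (intro exI[of _ 0] exI[of _ 1]) auto
  next
    case (LV k) then show ?thesis using dV[of k] by (intro exI[of _ 0] exI[of _ 1]) auto
  next
    case (LXi i) then have "i \<le> N" using assms by (auto simp: labels_def)
    then show ?thesis using dxi0[of i] s LXi by (intro exI[of _ m0] exI[of _ "sqrt P0"]) auto
  next
    case (LVp i k) then have "i \<le> N" using assms by (auto simp: labels_def)
    then show ?thesis using dVp[of i k] LVp by (intro exI[of _ 0] exI[of _ 1]) auto
  next
    case (LWp i k) then have "i \<le> N" using assms by (auto simp: labels_def)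
    then show ?thesis using dWp[of i k] LWp by (intro exI[of _ 0] exI[of _ 1]) auto
  qed
qed

lemma rv_meas: "l \<in> labels N \<Longrightarrow> rv l \<in> borel_measurable M"
  using rv_normal by (metis distributed_measurable measurable_lborel1)

definition detby :: "rvlabel set \<Rightarrow> ('a \<Rightarrow> real) \<Rightarrow> bool" where
  "detby K f \<longleftrightarrow> (\<exists>F \<in> borel_measurable (PiM K (\<lambda>_. borel :: real measure)).
      \<forall>\<omega>\<in>space M. f \<omega> = F (restrict (\<lambda>l. rv l \<omega>) K))"

lemma detby_rv: "l \<in> K \<Longrightarrow> detby K (rv l)"
  unfolding detby_def by (rule bexI[of _ "\<lambda>u. u l"]) auto

lemma detby_const: "detby K (\<lambda>_. c)"
  unfolding detby_def by (rule bexI[of _ "\<lambda>u. c"]) auto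

lemma detby_add: "detby K f \<Longrightarrow> detby K g \<Longrightarrow> detby K (\<lambda>\<omega>. f \<omega> + g \<omega>)"
  unfolding detby_def
  apply clarify
  subgoal for F G by (rule bexI[of _ "\<lambda>u. F u + G u"]) auto
  done

lemma detby_diff: "detby K f \<Longrightarrow> detby K g \<Longrightarrow> detby K (\<lambda>\<omega>. f \<omega> - g \<omega>)"
  unfolding detby_def
  apply clarify
  subgoal for F G by (rule bexI[of _ "\<lambda>u. F u - G u"]) auto
  done

lemma detby_mult: "detby K f \<Longrightarrow> detby K g \<Longrightarrow> detby K (\<lambda>\<omega>. f \<omega> * g \<omega>)"
  unfolding detby_def
  apply clarify
  subgoal for F G by (rule bexI[of _ "\<lambda>u. F u * G u"]) auto
  done

lemma detby_divide: "detby K f \<Longrightarrow> detby K g \<Longrightarrow> detby K (\<lambda>\<omega>. f \<omega> / g \<omega>)"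
  unfolding detby_def
  apply clarify
  subgoal for F G by (rule bexI[of _ "\<lambda>u. F u / G u"]) auto
  done

lemma detby_power: "detby K f \<Longrightarrow> detby K (\<lambda>\<omega>. f \<omega> ^ k)"
  unfolding detby_def
  apply clarify
  subgoal for F by (rule bexI[of _ "\<lambda>u. F u ^ k"]) auto
  done

lemma detby_sum:
  assumes "finite I" "\<And>i. i \<in> I \<Longrightarrow> detby K (f i)"
  shows "detby K (\<lambda>\<omega>. \<Sum>i\<in>I. f i \<omega>)"
  using assms
proof (induction I rule: finite_induct)
  case empty then show ?case by (simp add: detby_const)
next
  case (insert x F) then show ?case by (simp add: detby_add)
qed

lemma detby_cong: "detby K f \<Longrightarrow> (\<And>\<omega>. \<omega> \<in> space M \<Longrightarrow> f \<omega> = g \<omega>) \<Longrightarrow> detby K g"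
  unfolding detby_def by auto

lemma detby_mono: assumes "K \<subseteq> K'" "detby K f" shows "detby K' f"
proof -
  from assms(2) obtain F where F: "F \<in> borel_measurable (PiM K (\<lambda>_. borel :: real measure))"
    "\<forall>\<omega>\<in>space M. f \<omega> = F (restrict (\<lambda>l. rv l \<omega>) K)" unfolding detby_def by auto
  show ?thesis unfolding detby_def
  proof (rule bexI[of _ "\<lambda>u. F (restrict u K)"])
    show "(\<lambda>u. F (restrict u K)) \<in> borel_measurable (PiM K' (\<lambda>_. borel :: real measure))"
      using measurable_comp[OF measurable_restrict_subset[OF assms(1)] F(1)] by (simp add: comp_def)
    show "\<forall>\<omega>\<in>space M. f \<omega> = F (restrict (restrict (\<lambda>l. rv l \<omega>) K') K)"
      using F(2) assms(1) by (simp add: restrict_restrict Int_absorb1 inf.absorb2)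
  qed
qed

lemma detby_meas: assumes "K \<subseteq> labels N" "detby K f" shows "f \<in> borel_measurable M"
proof -
  from assms(2) obtain F where F: "F \<in> borel_measurable (PiM K (\<lambda>_. borel :: real measure))"
    "\<forall>\<omega>\<in>space M. f \<omega> = F (restrict (\<lambda>l. rv l \<omega>) K)" unfolding detby_def by auto
  have "(\<lambda>\<omega>. restrict (\<lambda>l. rv l \<omega>) K) \<in> measurable M (PiM K (\<lambda>_. borel :: real measure))"
    using assms(1) rv_meas by (intro measurable_restrict) auto
  then have "(\<lambda>\<omega>. F (restrict (\<lambda>l. rv l \<omega>) K)) \<in> borel_measurable M"
    using F(1) by (rule measurable_compose)
  then show ?thesis using F(2) by (subst measurable_cong) auto
qed

lemma detby_indep:
  assumes KL: "K \<inter> L = {}" "K \<subseteq> labels N" "L \<subseteq> labels N"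
    and f: "detby K f" "integrable M f" and g: "detby L g" "integrable M g"
  shows "integrable M (\<lambda>\<omega>. f \<omega> * g \<omega>) \<and> expectation (\<lambda>\<omega>. f \<omega> * g \<omega>) = expectation f * expectation g"
proof -
  from f(1) obtain F where F: "F \<in> borel_measurable (PiM K (\<lambda>_. borel :: real measure))"
    "\<forall>\<omega>\<in>space M. f \<omega> = F (restrict (\<lambda>l. rv l \<omega>) K)" unfolding detby_def by auto
  from g(1) obtain G where G: "G \<in> borel_measurable (PiM L (\<lambda>_. borel :: real measure))"
    "\<forall>\<omega>\<in>space M. g \<omega> = G (restrict (\<lambda>l. rv l \<omega>) L)" unfolding detby_def by auto
  have iv: "indep_var borel (F \<circ> (\<lambda>\<omega>. restrict (\<lambda>l. rv l \<omega>) K)) borel (G \<circ> (\<lambda>\<omega>. restrict (\<lambda>l. rv l \<omega>) L))"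
    by (rule indep_var_compose[OF indep_var_restrict[OF ind KL] F(1) G(1)])
  have i1: "integrable M (F \<circ> (\<lambda>\<omega>. restrict (\<lambda>l. rv l \<omega>) K))"
    using f(2) F(2) by (intro integrable_cong_sp[OF f(2)]) (auto simp: comp_def)
  have i2: "integrable M (G \<circ> (\<lambda>\<omega>. restrict (\<lambda>l. rv l \<omega>) L))"
    using g(2) G(2) by (intro integrable_cong_sp[OF g(2)]) (auto simp: comp_def)
  note r1 = indep_var_integrable[OF iv i1 i2] and r2 = indep_var_lebesgue_integral[OF iv i1 i2]
  have e1: "expectation (F \<circ> (\<lambda>\<omega>. restrict (\<lambda>l. rv l \<omega>) K)) = expectation f"
    using F(2) by (intro Bochner_Integration.integral_cong) (auto simp: comp_def)
  have e2: "expectation (G \<circ> (\<lambda>\<omega>. restrict (\<lambda>l. rv l \<omega>) L)) = expectation g"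
    using G(2) by (intro Bochner_Integration.integral_cong) (auto simp: comp_def)
  have e3: "expectation (\<lambda>\<omega>. (F \<circ> (\<lambda>\<omega>. restrict (\<lambda>l. rv l \<omega>) K)) \<omega> * (G \<circ> (\<lambda>\<omega>. restrict (\<lambda>l. rv l \<omega>) L)) \<omega>)
      = expectation (\<lambda>\<omega>. f \<omega> * g \<omega>)"
    using F(2) G(2) by (intro Bochner_Integration.integral_cong) (auto simp: comp_def)
  have "integrable M (\<lambda>\<omega>. f \<omega> * g \<omega>)"
    using F(2) G(2) by (intro integrable_cong_sp[OF r1]) (auto simp: comp_def)
  then show ?thesis using r2 e1 e2 e3 by (simp add: comp_def)
qed

end


definition scov :: "nat \<Rightarrow> (nat \<Rightarrow> real) \<Rightarrow> (nat \<Rightarrow> real) \<Rightarrow> real" where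
  "scov N x y = (\<Sum>i\<le>N. (x i - smean N x) * (y i - smean N y)) / real N"

lemma aux_mean: "r > 0 \<Longrightarrow> (a * Sx + b * Sy + r * c) / r = a * (Sx / r) + b * (Sy / r) + (c::real)"
  by (simp add: field_simps)

lemma smean_lin: "smean N (\<lambda>i. a * x i + b * y i + c) = a * smean N x + b * smean N y + c"
proof -
  have "(\<Sum>i\<le>N. a * x i + b * y i + c) = (\<Sum>i\<le>N. a * x i) + (\<Sum>i\<le>N. b * y i) + (\<Sum>i\<le>N. c)"
    by (simp add: sum.distrib)
  also have "\<dots> = a * (\<Sum>i\<le>N. x i) + b * (\<Sum>i\<le>N. y i) + real (N+1) * c"
    by (simp add: sum_distrib_left)
  finally show ?thesis unfolding smean_def using aux_mean[of "real (N+1)"] by simp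
qed

lemma sum_dev_zero: "(\<Sum>i\<le>N. (x i - smean N x)) = 0"
proof -
  have "(\<Sum>i\<le>N. (x i - smean N x)) = (\<Sum>i\<le>N. x i) - real (N+1) * smean N x"
    by (simp add: sum_subtractf)
  also have "\<dots> = 0" unfolding smean_def by (simp add: field_simps)
  finally show ?thesis .
qed

lemma scov_alt: "scov N x y = (\<Sum>i\<le>N. (x i - smean N x) * y i) / real N"
proof -
  have "(\<Sum>i\<le>N. (x i - smean N x) * (y i - smean N y)) = (\<Sum>i\<le>N. (x i - smean N x) * y i - (x i - smean N x) * smean N y)"
    by (simp add: right_diff_distrib)
  also have "\<dots> = (\<Sum>i\<le>N. (x i - smean N x) * y i) - (\<Sum>i\<le>N. (x i - smean N x)) * smean N y"
    by (simp only: sum_subtractf sum_distrib_right[symmetric])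
  finally show ?thesis unfolding scov_def using sum_dev_zero[of x N] by simp
qed

lemma svar_lin: "svar N (\<lambda>i. a * x i + b * y i + c) = a^2 * svar N x + b^2 * svar N y + 2 * a * b * scov N x y"
proof -
  have e: "\<And>i. (a * x i + b * y i + c - smean N (\<lambda>i. a * x i + b * y i + c))^2 =
     a^2 * (x i - smean N x)^2 + b^2 * (y i - smean N y)^2 + 2*a*b * ((x i - smean N x) * (y i - smean N y))"
    unfolding smean_lin by (simp add: power2_eq_square algebra_simps)
  show ?thesis unfolding svar_def scov_def e
    by (simp add: sum.distrib sum_distrib_left add_divide_distrib)
qed

lemma aux_var: "r > 0 \<Longrightarrow> T - 2 * (S / r) * S + r * (S / r)^2 = T - S^2 / (r::real)"
  by (simp add: field_simps power2_eq_square)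

lemma svar_alt: "svar N z = ((\<Sum>i\<le>N. (z i)^2) - (\<Sum>i\<le>N. z i)^2 / real (N+1)) / real N"
proof -
  have e: "\<And>i. (z i - smean N z)^2 = (z i)^2 - 2 * smean N z * z i + (smean N z)^2"
    by (simp add: power2_eq_square algebra_simps)
  have "(\<Sum>i\<le>N. (z i - smean N z)^2) = (\<Sum>i\<le>N. (z i)^2) - 2 * smean N z * (\<Sum>i\<le>N. z i) + real (N+1) * (smean N z)^2"
    unfolding e by (simp add: sum.distrib sum_subtractf sum_distrib_left)
  also have "\<dots> = (\<Sum>i\<le>N. (z i)^2) - (\<Sum>i\<le>N. z i)^2 / real (N+1)"
    unfolding smean_def using aux_var[of "real (N+1)"] by simp
  finally show ?thesis unfolding svar_def by simp
qed

lemma svar_shift: "svar N (\<lambda>i. x i + c) = svar N x"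
  using svar_lin[of N 1 x 0 x c] by simp

lemma svar_le: "svar N x \<le> (\<Sum>i\<le>N. (x i - c)^2) / real N"
proof -
  have "svar N x = svar N (\<lambda>i. x i - c)" using svar_shift[of N "\<lambda>i. x i - c" c] by simp
  also have "\<dots> = ((\<Sum>i\<le>N. (x i - c)^2) - (\<Sum>i\<le>N. x i - c)^2 / real (N+1)) / real N"
    by (rule svar_alt)
  also have "\<dots> \<le> (\<Sum>i\<le>N. (x i - c)^2) / real N"
    by (intro divide_right_mono) auto
  finally show ?thesis .
qed

lemma sq_sum: "(\<Sum>i\<le>N. (z::nat\<Rightarrow>real) i)^2 = (\<Sum>i\<le>N. \<Sum>j\<le>N. z i * z j)"
  unfolding power2_eq_square by (rule sum_product)



lemma abs_le_1_sq: "\<bar>x::real\<bar> \<le> 1 + x^2"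
proof (cases "\<bar>x\<bar> \<le> 1")
  case True then show ?thesis by (smt (verit) zero_le_power2)
next
  case False then have "\<bar>x\<bar> * 1 \<le> \<bar>x\<bar> * \<bar>x\<bar>" by (intro mult_left_mono) auto
  then show ?thesis by (simp add: power2_eq_square abs_mult_self_eq)
qed

lemma abs_mult_le_sq: "\<bar>x*y::real\<bar> \<le> x^2 + y^2"
proof -
  have "0 \<le> (\<bar>x\<bar> - \<bar>y\<bar>)^2" by simp
  then have "2 * (\<bar>x\<bar> * \<bar>y\<bar>) \<le> x^2 + y^2" by (simp add: power2_diff)
  then have "\<bar>x\<bar> * \<bar>y\<bar> \<le> x^2 + y^2" using mult_nonneg_nonneg[OF abs_ge_zero abs_ge_zero, of x y] by linarith
  then show ?thesis by (simp add: abs_mult)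
qed

context ekf begin

lemma int_bound: assumes "integrable M f" "g \<in> borel_measurable M"
    "\<And>x. x \<in> space M \<Longrightarrow> \<bar>g x\<bar> \<le> \<bar>(f x::real)\<bar>"
  shows "integrable M (g::'a\<Rightarrow>real)"
  by (rule Bochner_Integration.integrable_bound[OF assms(1,2)]) (use assms(3) in auto)

definition sqi :: "('a \<Rightarrow> real) \<Rightarrow> bool" where
  "sqi f \<longleftrightarrow> f \<in> borel_measurable M \<and> integrable M (\<lambda>\<omega>. (f \<omega>)^2)"

lemma sqi_meas: "sqi f \<Longrightarrow> f \<in> borel_measurable M" by (simp add: sqi_def)

lemma sqi_add: assumes "sqi f" "sqi g" shows "sqi (\<lambda>\<omega>. f \<omega> + g \<omega>)"
proof -
  have [measurable]: "f \<in> borel_measurable M" "g \<in> borel_measurable M" using assms by (auto simp: sqi_def)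
  have i: "integrable M (\<lambda>\<omega>. 2 * (f \<omega>)^2 + 2 * (g \<omega>)^2)" using assms unfolding sqi_def by auto
  have b: "\<And>\<omega>. \<bar>(f \<omega> + g \<omega>)^2\<bar> \<le> \<bar>2 * (f \<omega>)^2 + 2 * (g \<omega>)^2\<bar>"
  proof -
    fix \<omega> have "0 \<le> (f \<omega> - g \<omega>)^2" by simp
    then have "(f \<omega> + g \<omega>)^2 \<le> 2 * (f \<omega>)^2 + 2 * (g \<omega>)^2"
      by (simp add: power2_eq_square algebra_simps)
    then show "\<bar>(f \<omega> + g \<omega>)^2\<bar> \<le> \<bar>2 * (f \<omega>)^2 + 2 * (g \<omega>)^2\<bar>" by simp
  qed
  have "integrable M (\<lambda>\<omega>. (f \<omega> + g \<omega>)^2)" by (rule int_bound[OF i]) (measurable, rule b)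
  then show ?thesis unfolding sqi_def by simp
qed

lemma sqi_cmult: assumes "sqi f" shows "sqi (\<lambda>\<omega>. c * f \<omega>)"
proof -
  have [measurable]: "f \<in> borel_measurable M" using assms by (auto simp: sqi_def)
  have "integrable M (\<lambda>\<omega>. c^2 * (f \<omega>)^2)" using assms unfolding sqi_def by auto
  then show ?thesis unfolding sqi_def by (simp add: power_mult_distrib)
qed

lemma sqi_const: "sqi (\<lambda>_. c)" unfolding sqi_def by simp

lemma sqi_diff: assumes "sqi f" "sqi g" shows "sqi (\<lambda>\<omega>. f \<omega> - g \<omega>)"
  using sqi_add[OF assms(1) sqi_cmult[OF assms(2), of "-1"]] by simp

lemma sqi_sum: assumes "finite I" "\<And>i. i \<in> I \<Longrightarrow> sqi (f i)" shows "sqi (\<lambda>\<omega>. \<Sum>i\<in>I. f i \<omega>)"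
  using assms
proof (induction I rule: finite_induct)
  case empty then show ?case by (simp add: sqi_const)
next
  case (insert x F) then show ?case by (simp add: sqi_add)
qed

lemma sqi_bmult: assumes "h \<in> borel_measurable M" "\<And>\<omega>. \<omega> \<in> space M \<Longrightarrow> \<bar>h \<omega>\<bar> \<le> c" "sqi f"
  shows "sqi (\<lambda>\<omega>. h \<omega> * f \<omega>)"
proof -
  have [measurable]: "f \<in> borel_measurable M" "h \<in> borel_measurable M" using assms by (auto simp: sqi_def)
  have i: "integrable M (\<lambda>\<omega>. c^2 * (f \<omega>)^2)" using assms unfolding sqi_def by auto
  have b: "\<And>\<omega>. \<omega> \<in> space M \<Longrightarrow> \<bar>(h \<omega> * f \<omega>)^2\<bar> \<le> \<bar>c^2 * (f \<omega>)^2\<bar>"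
  proof -
    fix \<omega> assume "\<omega> \<in> space M"
    then have "\<bar>h \<omega>\<bar> \<le> c" using assms(2) by blast
    then have "\<bar>h \<omega>\<bar>^2 \<le> c^2" by (intro power_mono) auto
    then have "(h \<omega>)^2 \<le> c^2" by simp
    then have "(h \<omega>)^2 * (f \<omega>)^2 \<le> c^2 * (f \<omega>)^2" by (intro mult_right_mono) auto
    then show "\<bar>(h \<omega> * f \<omega>)^2\<bar> \<le> \<bar>c^2 * (f \<omega>)^2\<bar>"
      by (simp add: power_mult_distrib)
  qed
  have "integrable M (\<lambda>\<omega>. (h \<omega> * f \<omega>)^2)" by (rule int_bound[OF i]) (measurable, rule b)
  then show ?thesis unfolding sqi_def by simp
qed

lemma sqi_int: assumes "sqi f" shows "integrable M f"
proof -
  have [measurable]: "f \<in> borel_measurable M" using assms by (auto simp: sqi_def)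
  have i: "integrable M (\<lambda>\<omega>. 1 + (f \<omega>)^2)" using assms unfolding sqi_def by auto
  have b: "\<And>\<omega>. \<bar>f \<omega>\<bar> \<le> \<bar>1 + (f \<omega>)^2\<bar>"
    using abs_le_1_sq by (metis abs_ge_zero abs_of_nonneg order_trans)
  show ?thesis by (rule int_bound[OF i]) (measurable, rule b)
qed

lemma sqi_prod_int: assumes "sqi f" "sqi g" shows "integrable M (\<lambda>\<omega>. f \<omega> * g \<omega>)"
proof -
  have [measurable]: "f \<in> borel_measurable M" "g \<in> borel_measurable M" using assms by (auto simp: sqi_def)
  have i: "integrable M (\<lambda>\<omega>. (f \<omega>)^2 + (g \<omega>)^2)" using assms unfolding sqi_def by auto
  have b: "\<And>\<omega>. \<bar>f \<omega> * g \<omega>\<bar> \<le> \<bar>(f \<omega>)^2 + (g \<omega>)^2\<bar>"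
    using abs_mult_le_sq by (metis abs_ge_zero abs_of_nonneg order_trans)
  show ?thesis by (rule int_bound[OF i]) (measurable, rule b)
qed

lemma sqi_sq_int: "sqi f \<Longrightarrow> integrable M (\<lambda>\<omega>. (f \<omega>)^2)" by (simp add: sqi_def)

lemma normal_sqi: assumes "\<sigma> > 0" "distributed M lborel X (normal_density \<mu> \<sigma>)" shows "sqi X"
proof -
  have m: "X \<in> borel_measurable M" using assms(2) by (metis distributed_measurable measurable_lborel1)
  have "integrable lborel (\<lambda>x. normal_density \<mu> \<sigma> x * (x - \<mu>)^2)"
    by (rule integrable_normal_moment) (use assms(1) in simp)
  then have "integrable M (\<lambda>\<omega>. (X \<omega> - \<mu>)^2)"
    using distributed_integrable[OF assms(2), of "\<lambda>x. (x - \<mu>)^2"] by simp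
  then have "sqi (\<lambda>\<omega>. X \<omega> - \<mu>)" unfolding sqi_def using m by simp
  from sqi_add[OF this sqi_const[of \<mu>]] show ?thesis by simp
qed

lemma sqi_rv: "l \<in> labels N \<Longrightarrow> sqi (rv l)"
  using rv_normal normal_sqi by blast

lemma std_moments: assumes "distributed M lborel X std_normal_density"
  shows "expectation X = 0" "expectation (\<lambda>\<omega>. (X \<omega>)^2) = 1"
  using standard_normal_distributed_expectation[OF assms] standard_normal_distributed_variance[OF assms]
  by auto

lemma xi0_moments: assumes "i \<le> N"
  shows "expectation (xi0 i) = m0" "expectation (\<lambda>\<omega>. (xi0 i \<omega> - m0)^2) = P0"
proof -
  have s: "sqrt P0 > 0" using P0pos by simp
  show e: "expectation (xi0 i) = m0" using normal_distributed_expectation[OF s dxi0[OF assms]] .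
  show "expectation (\<lambda>\<omega>. (xi0 i \<omega> - m0)^2) = P0"
    using normal_distributed_variance[OF s dxi0[OF assms]] e P0pos by simp
qed

end


lemma gain_bound: assumes "p \<ge> 0" "C \<noteq> 0" shows "\<bar>gain C D p\<bar> \<le> 1 / \<bar>C\<bar>"
proof (cases "p = 0")
  case True then show ?thesis by (simp add: gain_def)
next
  case False
  then have p: "p > 0" using assms by simp
  have cp: "C^2 * p > 0" using p assms by simp
  have "\<bar>gain C D p\<bar> = \<bar>C\<bar> * p / (C^2 * p + D^2)"
    unfolding gain_def using p by (simp add: abs_mult abs_divide)
  also have "\<dots> \<le> \<bar>C\<bar> * p / (C^2 * p)"
    using p cp by (intro divide_left_mono) (auto intro!: mult_pos_pos add_pos_nonneg)
  also have "\<dots> = 1 / \<bar>C\<bar>" using p assms by (simp add: power2_eq_square field_simps)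
  finally show ?thesis .
qed

context ekf begin

definition "Kx n = {LX0} \<union> range LW \<union> range LV \<union> LXi ` {..N} \<union> {LVp i k |i k. i \<le> N \<and> k < n}
   \<union> {LWp i k |i k. i \<le> N \<and> k \<le> n}"
definition "Lv n = {LVp i n | i. i \<le> N}"
definition "Lw n = {LWp i (Suc n) | i. i \<le> N}"

lemma Kx_sub: "Kx n \<subseteq> labels N" unfolding Kx_def labels_def by auto
lemma Lv_sub: "Lv n \<subseteq> labels N" unfolding Lv_def labels_def by auto
lemma Lw_sub: "Lw n \<subseteq> labels N" unfolding Lw_def labels_def by auto
lemma Kx_Lv: "Kx n \<inter> Lv n = {}" unfolding Kx_def Lv_def by auto
lemma Kh_Lw: "(Kx n \<union> Lv n) \<inter> Lw n = {}" unfolding Kx_def Lv_def Lw_def by auto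
lemma Kx_Suc: "Kx n \<union> Lv n \<union> Lw n \<subseteq> Kx (Suc n)" unfolding Kx_def Lv_def Lw_def by auto
lemma Kh_sub: "Kx n \<union> Lv n \<subseteq> labels N" using Kx_sub Lv_sub by auto

definition "xx n \<omega> = enkf A B C D N X0 W V xi0 Vp Wp n \<omega>"
definition "YY n = obsY A B C D X0 W V n"
definition "vv n \<omega> = (\<lambda>j. Vp j n \<omega>)"
definition "ww n \<omega> = (\<lambda>j. Wp j (Suc n) \<omega>)"
definition "xh n \<omega> = analysis C D N (YY n \<omega>) (vv n \<omega>) (xx n \<omega>)"
definition "pp n \<omega> = svar N (xx n \<omega>)"
definition "ph n \<omega> = svar N (xh n \<omega>)"
definition "gg n \<omega> = gain C D (pp n \<omega>)"

lemma xx_0: "xx 0 \<omega> i = xi0 i \<omega>" by (simp add: xx_def)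
lemma xx_Suc: "xx (Suc n) \<omega> i = A * xh n \<omega> i + B * ww n \<omega> i"
  by (simp add: xx_def xh_def YY_def vv_def ww_def)
lemma xh_eq: "xh n \<omega> i = xx n \<omega> i + gg n \<omega> * (YY n \<omega> - C * xx n \<omega> i - D * vv n \<omega> i)"
  by (simp add: xh_def analysis_def gg_def pp_def)

lemma detby_svar: "(\<And>i. i \<le> N \<Longrightarrow> detby K (\<lambda>\<omega>. f \<omega> i)) \<Longrightarrow> detby K (\<lambda>\<omega>. svar N (f \<omega>))"
  unfolding svar_def smean_def
  by (intro detby_divide detby_sum detby_power detby_diff detby_const) auto

lemma detby_gain: "detby K f \<Longrightarrow> detby K (\<lambda>\<omega>. gain C D (f \<omega>))"
  unfolding gain_def by (intro detby_divide detby_mult detby_add detby_const) auto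

lemma detby_rv': "l \<in> K \<Longrightarrow> f = rv l \<Longrightarrow> detby K f" using detby_rv by simp

lemma detby_sigX: "{LX0} \<union> range LW \<subseteq> K \<Longrightarrow> detby K (sigX A B X0 W n)"
proof (induction n)
  case 0 then show ?case by (auto intro: detby_rv')
next
  case (Suc n)
  have "detby K (W (Suc n))" by (rule detby_rv'[of "LW (Suc n)"]) (use Suc.prems in auto)
  then show ?case using Suc by (auto intro!: detby_add detby_mult detby_const)
qed

lemma detby_Y: "{LX0} \<union> range LW \<union> range LV \<subseteq> K \<Longrightarrow> detby K (YY n)"
proof -
  assume a: "{LX0} \<union> range LW \<union> range LV \<subseteq> K"
  have "detby K (V n)" by (rule detby_rv'[of "LV n"]) (use a in auto)
  moreover have "detby K (sigX A B X0 W n)" using a by (intro detby_sigX) auto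
  ultimately have "detby K (\<lambda>\<omega>. C * sigX A B X0 W n \<omega> + D * V n \<omega>)"
    by (intro detby_add detby_mult detby_const) auto
  then show ?thesis unfolding YY_def obsY_def[abs_def] by simp
qed

lemma detby_xh_from:
  assumes h: "\<And>j. j \<le> N \<Longrightarrow> detby (Kx n) (\<lambda>\<omega>. xx n \<omega> j)" and i: "i \<le> N"
  shows "detby (Kx n \<union> Lv n) (\<lambda>\<omega>. xh n \<omega> i)"
proof -
  let ?K = "Kx n \<union> Lv n"
  have x: "\<And>j. j \<le> N \<Longrightarrow> detby ?K (\<lambda>\<omega>. xx n \<omega> j)" using h by (rule detby_mono[rotated]) auto
  have p: "detby ?K (pp n)" unfolding pp_def[abs_def] by (rule detby_svar) (rule x)
  have g: "detby ?K (gg n)" unfolding gg_def[abs_def] using detby_gain[OF p] by simp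
  have y: "detby ?K (YY n)" by (rule detby_Y) (auto simp: Kx_def)
  have v: "detby ?K (\<lambda>\<omega>. vv n \<omega> i)"
    by (rule detby_rv'[of "LVp i n"]) (use i in \<open>auto simp: Lv_def vv_def fun_eq_iff\<close>)
  show ?thesis unfolding xh_eq
    by (intro detby_add detby_mult detby_diff detby_const x[OF i] g y v)
qed

lemma detby_xx: "i \<le> N \<Longrightarrow> detby (Kx n) (\<lambda>\<omega>. xx n \<omega> i)"
proof (induction n arbitrary: i)
  case 0
  then show ?case
    unfolding xx_0 by (intro detby_rv'[of "LXi i"]) (auto simp: Kx_def fun_eq_iff)
next
  case (Suc n)
  have h: "detby (Kx n \<union> Lv n \<union> Lw n) (\<lambda>\<omega>. xh n \<omega> i)"
    by (rule detby_mono[OF _ detby_xh_from[OF Suc.IH Suc.prems]]) auto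
  have w: "detby (Kx n \<union> Lv n \<union> Lw n) (\<lambda>\<omega>. ww n \<omega> i)"
    by (rule detby_rv'[of "LWp i (Suc n)"]) (use Suc.prems in \<open>auto simp: Lw_def ww_def fun_eq_iff\<close>)
  have "detby (Kx n \<union> Lv n \<union> Lw n) (\<lambda>\<omega>. xx (Suc n) \<omega> i)"
    unfolding xx_Suc by (intro detby_add detby_mult detby_const h w)
  then show ?case by (rule detby_mono[OF Kx_Suc])
qed

lemma detby_xh: "i \<le> N \<Longrightarrow> detby (Kx n \<union> Lv n) (\<lambda>\<omega>. xh n \<omega> i)"
  by (rule detby_xh_from[OF detby_xx])

lemma detby_pp: "detby (Kx n) (pp n)"
  unfolding pp_def[abs_def] by (rule detby_svar) (rule detby_xx)

lemma detby_gg: "detby (Kx n) (gg n)"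
  unfolding gg_def[abs_def] using detby_gain[OF detby_pp] by simp

lemma detby_ph: "detby (Kx n \<union> Lv n) (ph n)"
  unfolding ph_def[abs_def] by (rule detby_svar) (rule detby_xh)

end


context ekf begin

lemma sqi_cdiv: "sqi f \<Longrightarrow> sqi (\<lambda>\<omega>. f \<omega> / c)"
  using sqi_cmult[of f "1/c"] by simp

lemma sqi_rv': "l \<in> labels N \<Longrightarrow> f = rv l \<Longrightarrow> sqi f" using sqi_rv by simp

lemma sqi_smean: "(\<And>i. i \<le> N \<Longrightarrow> sqi (\<lambda>\<omega>. f \<omega> i)) \<Longrightarrow> sqi (\<lambda>\<omega>. smean N (f \<omega>))"
  unfolding smean_def by (intro sqi_cdiv sqi_sum) auto

lemma sqi_dev: "(\<And>i. i \<le> N \<Longrightarrow> sqi (\<lambda>\<omega>. f \<omega> i)) \<Longrightarrow> i \<le> N \<Longrightarrow> sqi (\<lambda>\<omega>. f \<omega> i - smean N (f \<omega>))"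
  by (intro sqi_diff sqi_smean) auto

lemma int_svar: "(\<And>i. i \<le> N \<Longrightarrow> sqi (\<lambda>\<omega>. f \<omega> i)) \<Longrightarrow> integrable M (\<lambda>\<omega>. svar N (f \<omega>))"
  unfolding svar_def
  by (intro integrable_divide_zero Bochner_Integration.integrable_sum sqi_sq_int sqi_dev) auto

lemma sqi_sigX: "sqi (sigX A B X0 W n)"
proof (induction n)
  case 0 show ?case by (rule sqi_rv'[of LX0]) (auto simp: labels_def)
next
  case (Suc n)
  have "sqi (W (Suc n))" by (rule sqi_rv'[of "LW (Suc n)"]) (auto simp: labels_def)
  then show ?case using Suc by (auto intro!: sqi_add sqi_cmult)
qed

lemma sqi_Y: "sqi (YY n)"
proof -
  have "sqi (V n)" by (rule sqi_rv'[of "LV n"]) (auto simp: labels_def)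
  then have "sqi (\<lambda>\<omega>. C * sigX A B X0 W n \<omega> + D * V n \<omega>)"
    using sqi_sigX by (intro sqi_add sqi_cmult) auto
  then show ?thesis unfolding YY_def obsY_def[abs_def] by simp
qed

lemma sqi_vv: "i \<le> N \<Longrightarrow> sqi (\<lambda>\<omega>. vv n \<omega> i)"
  by (rule sqi_rv'[of "LVp i n"]) (auto simp: labels_def vv_def fun_eq_iff)

lemma sqi_ww: "i \<le> N \<Longrightarrow> sqi (\<lambda>\<omega>. ww n \<omega> i)"
  by (rule sqi_rv'[of "LWp i (Suc n)"]) (auto simp: labels_def ww_def fun_eq_iff)

lemma meas_gg: "gg n \<in> borel_measurable M" by (rule detby_meas[OF Kx_sub detby_gg])
lemma meas_pp: "pp n \<in> borel_measurable M" by (rule detby_meas[OF Kx_sub detby_pp])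
lemma meas_ph: "ph n \<in> borel_measurable M" by (rule detby_meas[OF Kh_sub detby_ph])

lemma pp_nonneg: "pp n \<omega> \<ge> 0" by (simp add: pp_def svar_nonneg)
lemma ph_nonneg: "ph n \<omega> \<ge> 0" by (simp add: ph_def svar_nonneg)

lemma gg_bound: "\<bar>gg n \<omega>\<bar> \<le> 1 / \<bar>C\<bar>"
  unfolding gg_def by (rule gain_bound[OF pp_nonneg Cnz])

lemma sqi_xx_xh: "i \<le> N \<Longrightarrow> sqi (\<lambda>\<omega>. xx n \<omega> i) \<and> sqi (\<lambda>\<omega>. xh n \<omega> i)"
proof (induction n arbitrary: i)
  case 0
  have x: "\<And>j. j \<le> N \<Longrightarrow> sqi (\<lambda>\<omega>. xx 0 \<omega> j)"
    unfolding xx_0 by (rule sqi_rv'[of "LXi _"]) (auto simp: labels_def fun_eq_iff)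
  have "sqi (\<lambda>\<omega>. xh 0 \<omega> i)" unfolding xh_eq
    by (intro sqi_add x[OF 0] sqi_bmult[OF meas_gg gg_bound] sqi_diff sqi_cmult sqi_Y sqi_vv 0)
  then show ?case using x[OF 0] by simp
next
  case (Suc n)
  have x: "\<And>j. j \<le> N \<Longrightarrow> sqi (\<lambda>\<omega>. xx (Suc n) \<omega> j)"
    unfolding xx_Suc using Suc.IH by (intro sqi_add sqi_cmult sqi_ww) auto
  have "sqi (\<lambda>\<omega>. xh (Suc n) \<omega> i)" unfolding xh_eq
    by (intro sqi_add x[OF Suc.prems] sqi_bmult[OF meas_gg gg_bound] sqi_diff sqi_cmult sqi_Y sqi_vv Suc.prems)
  then show ?case using x[OF Suc.prems] by simp
qed

lemma sqi_xx: "i \<le> N \<Longrightarrow> sqi (\<lambda>\<omega>. xx n \<omega> i)" using sqi_xx_xh by blast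
lemma sqi_xh: "i \<le> N \<Longrightarrow> sqi (\<lambda>\<omega>. xh n \<omega> i)" using sqi_xx_xh by blast

lemma int_pp: "integrable M (pp n)" unfolding pp_def[abs_def] by (rule int_svar[OF sqi_xx])
lemma int_ph: "integrable M (ph n)" unfolding ph_def[abs_def] by (rule int_svar[OF sqi_xh])

end


context ekf begin

lemma E_svar_family:
  assumes sq: "\<And>i. i \<le> N \<Longrightarrow> sqi (Z i)"
    and m2: "\<And>i. i \<le> N \<Longrightarrow> expectation (\<lambda>\<omega>. (Z i \<omega>)^2) = s"
    and cr: "\<And>i j. i \<le> N \<Longrightarrow> j \<le> N \<Longrightarrow> i \<noteq> j \<Longrightarrow> expectation (\<lambda>\<omega>. Z i \<omega> * Z j \<omega>) = 0"
  shows "expectation (\<lambda>\<omega>. svar N (\<lambda>i. Z i \<omega>)) = s"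
proof -
  have eq: "\<And>\<omega>. svar N (\<lambda>i. Z i \<omega>) = ((\<Sum>i\<le>N. (Z i \<omega>)^2) - (\<Sum>i\<le>N. \<Sum>j\<le>N. Z i \<omega> * Z j \<omega>) / real (N+1)) / real N"
    by (simp add: svar_alt sq_sum)
  have i1: "\<And>i. i \<le> N \<Longrightarrow> integrable M (\<lambda>\<omega>. (Z i \<omega>)^2)" using sq sqi_sq_int by blast
  have i2: "\<And>i j. i \<le> N \<Longrightarrow> j \<le> N \<Longrightarrow> integrable M (\<lambda>\<omega>. Z i \<omega> * Z j \<omega>)"
    using sq sqi_prod_int by blast
  have e1: "expectation (\<lambda>\<omega>. \<Sum>i\<le>N. (Z i \<omega>)^2) = real (N+1) * s"
    using i1 m2 by (subst Bochner_Integration.integral_sum) auto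
  have inner: "\<And>i. i \<le> N \<Longrightarrow> (\<Sum>j\<le>N. expectation (\<lambda>\<omega>. Z i \<omega> * Z j \<omega>)) = s"
  proof -
    fix i assume i: "i \<le> N"
    have "(\<Sum>j\<le>N. expectation (\<lambda>\<omega>. Z i \<omega> * Z j \<omega>)) = (\<Sum>j\<le>N. if j = i then s else 0)"
      using m2[OF i] cr[OF i] by (intro sum.cong) (auto simp: power2_eq_square)
    also have "\<dots> = s" using i by (simp add: sum.delta')
    finally show "(\<Sum>j\<le>N. expectation (\<lambda>\<omega>. Z i \<omega> * Z j \<omega>)) = s" .
  qed
  have e2: "expectation (\<lambda>\<omega>. \<Sum>i\<le>N. \<Sum>j\<le>N. Z i \<omega> * Z j \<omega>) = real (N+1) * s"
  proof -
    have "expectation (\<lambda>\<omega>. \<Sum>i\<le>N. \<Sum>j\<le>N. Z i \<omega> * Z j \<omega>) = (\<Sum>i\<le>N. expectation (\<lambda>\<omega>. \<Sum>j\<le>N. Z i \<omega> * Z j \<omega>))"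
      using i2 by (intro Bochner_Integration.integral_sum Bochner_Integration.integrable_sum) auto
    also have "\<dots> = (\<Sum>i\<le>N. \<Sum>j\<le>N. expectation (\<lambda>\<omega>. Z i \<omega> * Z j \<omega>))"
      using i2 by (intro sum.cong refl Bochner_Integration.integral_sum) auto
    also have "\<dots> = (\<Sum>i\<le>N. s)" using inner by (intro sum.cong) auto
    finally show ?thesis by simp
  qed
  have "expectation (\<lambda>\<omega>. svar N (\<lambda>i. Z i \<omega>)) =
     (expectation (\<lambda>\<omega>. \<Sum>i\<le>N. (Z i \<omega>)^2) - expectation (\<lambda>\<omega>. \<Sum>i\<le>N. \<Sum>j\<le>N. Z i \<omega> * Z j \<omega>) / real (N+1)) / real N"
    unfolding eq using i1 i2
    by (subst integral_divide_zero, subst Bochner_Integration.integral_diff) (auto intro!: Bochner_Integration.integrable_sum)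
  also have "\<dots> = s"
  proof -
    have a: "real (N+1) * s / real (N+1) = s" by (rule nonzero_mult_div_cancel_left) simp
    have b: "real N \<noteq> 0" using N1 by simp
    show ?thesis unfolding e1 e2 a using b by (simp add: algebra_simps)
  qed
  finally show ?thesis .
qed

lemma E_svar_vv: "expectation (\<lambda>\<omega>. svar N (vv n \<omega>)) = 1"
proof -
  have "expectation (\<lambda>\<omega>. svar N (\<lambda>i. Vp i n \<omega>)) = 1"
  proof (rule E_svar_family)
    fix i assume i: "i \<le> N"
    show "sqi (Vp i n)" using sqi_vv[OF i] by (simp add: vv_def)
    show "expectation (\<lambda>\<omega>. (Vp i n \<omega>)^2) = 1" using std_moments(2)[OF dVp[OF i]] .
  next
    fix i j assume ij: "i \<le> N" "j \<le> N" "i \<noteq> j"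
    have d: "\<And>k. detby {LVp k n} (Vp k n)" by (rule detby_rv') auto
    have s: "\<And>k. k \<le> N \<Longrightarrow> integrable M (Vp k n)" using sqi_int[OF sqi_vv[of _ n]] by (simp add: vv_def)
    have "integrable M (\<lambda>\<omega>. Vp i n \<omega> * Vp j n \<omega>) \<and> expectation (\<lambda>\<omega>. Vp i n \<omega> * Vp j n \<omega>) = expectation (Vp i n) * expectation (Vp j n)"
      by (rule detby_indep[OF _ _ _ d s d s]) (use ij in \<open>auto simp: labels_def\<close>)
    then show "expectation (\<lambda>\<omega>. Vp i n \<omega> * Vp j n \<omega>) = 0" using std_moments(1)[OF dVp[OF ij(1)]] by simp
  qed
  then show ?thesis by (simp add: vv_def)
qed

lemma E_svar_ww: "expectation (\<lambda>\<omega>. svar N (ww n \<omega>)) = 1"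
proof -
  have "expectation (\<lambda>\<omega>. svar N (\<lambda>i. Wp i (Suc n) \<omega>)) = 1"
  proof (rule E_svar_family)
    fix i assume i: "i \<le> N"
    show "sqi (Wp i (Suc n))" using sqi_ww[OF i] by (simp add: ww_def)
    show "expectation (\<lambda>\<omega>. (Wp i (Suc n) \<omega>)^2) = 1" using std_moments(2)[OF dWp[OF i]] .
  next
    fix i j assume ij: "i \<le> N" "j \<le> N" "i \<noteq> j"
    have d: "\<And>k. detby {LWp k (Suc n)} (Wp k (Suc n))" by (rule detby_rv') auto
    have s: "\<And>k. k \<le> N \<Longrightarrow> integrable M (Wp k (Suc n))" using sqi_int[OF sqi_ww[of _ n]] by (simp add: ww_def)
    have "integrable M (\<lambda>\<omega>. Wp i (Suc n) \<omega> * Wp j (Suc n) \<omega>) \<and> expectation (\<lambda>\<omega>. Wp i (Suc n) \<omega> * Wp j (Suc n) \<omega>) = expectation (Wp i (Suc n)) * expectation (Wp j (Suc n))"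
      by (rule detby_indep[OF _ _ _ d s d s]) (use ij in \<open>auto simp: labels_def\<close>)
    then show "expectation (\<lambda>\<omega>. Wp i (Suc n) \<omega> * Wp j (Suc n) \<omega>) = 0" using std_moments(1)[OF dWp[OF ij(1)]] by simp
  qed
  then show ?thesis by (simp add: ww_def)
qed

lemma E_pp0: "expectation (pp 0) = P0"
proof -
  have eq: "\<And>\<omega>. pp 0 \<omega> = svar N (\<lambda>i. xi0 i \<omega> - m0)"
    unfolding pp_def using svar_shift[of N "\<lambda>i. xi0 i _ - m0" m0] by (simp add: xx_0[abs_def] fun_eq_iff xx_def[symmetric])
  have "expectation (\<lambda>\<omega>. svar N (\<lambda>i. xi0 i \<omega> - m0)) = P0"
  proof (rule E_svar_family)
    fix i assume i: "i \<le> N"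
    have "sqi (xi0 i)" by (rule sqi_rv'[of "LXi i"]) (use i in \<open>auto simp: labels_def\<close>)
    then show "sqi (\<lambda>\<omega>. xi0 i \<omega> - m0)" by (intro sqi_diff sqi_const)
    show "expectation (\<lambda>\<omega>. (xi0 i \<omega> - m0)^2) = P0" using xi0_moments(2)[OF i] .
  next
    fix i j assume ij: "i \<le> N" "j \<le> N" "i \<noteq> j"
    have s: "\<And>k. k \<le> N \<Longrightarrow> sqi (\<lambda>\<omega>. xi0 k \<omega> - m0)"
      by (intro sqi_diff sqi_const sqi_rv'[of "LXi _"]) (auto simp: labels_def)
    have d: "\<And>k. detby {LXi k} (\<lambda>\<omega>. xi0 k \<omega> - m0)"
      by (intro detby_diff detby_const detby_rv'[of "LXi _"]) auto
    have ind: "integrable M (\<lambda>\<omega>. (xi0 i \<omega> - m0) * (xi0 j \<omega> - m0)) \<and> expectation (\<lambda>\<omega>. (xi0 i \<omega> - m0) * (xi0 j \<omega> - m0))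
       = expectation (\<lambda>\<omega>. xi0 i \<omega> - m0) * expectation (\<lambda>\<omega>. xi0 j \<omega> - m0)"
      by (rule detby_indep[of "{LXi i}" "{LXi j}"]) (use ij in \<open>auto simp: labels_def intro!: d sqi_int s\<close>)
    have ii: "integrable M (xi0 i)" by (rule sqi_int, rule sqi_rv'[of "LXi i"]) (use ij in \<open>auto simp: labels_def\<close>)
    have "expectation (\<lambda>\<omega>. xi0 i \<omega> - m0) = expectation (xi0 i) - expectation (\<lambda>_. m0)"
      by (rule Bochner_Integration.integral_diff[OF ii]) simp
    moreover have "expectation (\<lambda>_. m0) = m0" by (simp add: prob_space)
    ultimately have "expectation (\<lambda>\<omega>. xi0 i \<omega> - m0) = 0" using xi0_moments(1)[OF ij(1)] by simp
    with ind show "expectation (\<lambda>\<omega>. (xi0 i \<omega> - m0) * (xi0 j \<omega> - m0)) = 0" by simp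
  qed
  then show ?thesis unfolding eq .
qed

end


context ekf begin

lemma ph_expand: "ph n \<omega> = (1 - gg n \<omega> * C)^2 * pp n \<omega> + D^2 * ((gg n \<omega>)^2 * svar N (vv n \<omega>))
   - (2 * D / real N) * (\<Sum>i\<le>N. ((1 - gg n \<omega> * C) * gg n \<omega> * (xx n \<omega> i - smean N (xx n \<omega>))) * vv n \<omega> i)"
proof -
  let ?g = "gg n \<omega>"
  have e: "xh n \<omega> = (\<lambda>i. (1 - ?g * C) * xx n \<omega> i + (- (?g * D)) * vv n \<omega> i + ?g * YY n \<omega>)"
    by (simp add: fun_eq_iff xh_eq algebra_simps)
  have s: "(\<Sum>i\<le>N. ((1 - ?g * C) * ?g * (xx n \<omega> i - smean N (xx n \<omega>))) * vv n \<omega> i)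
      = (1 - ?g * C) * ?g * (\<Sum>i\<le>N. (xx n \<omega> i - smean N (xx n \<omega>)) * vv n \<omega> i)"
    by (simp add: sum_distrib_left mult.assoc)
  show ?thesis unfolding ph_def e svar_lin scov_alt s pp_def
    by (simp add: power2_eq_square algebra_simps)
qed

lemma pp_Suc_expand: "pp (Suc n) \<omega> = A^2 * ph n \<omega> + B^2 * svar N (ww n \<omega>)
   + (2 * A * B / real N) * (\<Sum>i\<le>N. (xh n \<omega> i - smean N (xh n \<omega>)) * ww n \<omega> i)"
proof -
  have e: "xx (Suc n) \<omega> = (\<lambda>i. A * xh n \<omega> i + B * ww n \<omega> i + 0)"
    by (simp add: fun_eq_iff xx_Suc)
  show ?thesis unfolding pp_def e svar_lin scov_alt ph_def
    by (simp add: algebra_simps)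
qed

end


lemma a_eq: assumes "p \<ge> 0" "D \<noteq> 0" shows "1 - gain C D p * C = D^2 / (C^2 * p + D^2)"
proof -
  have "C^2 * p + D^2 > 0" using assms by (intro add_nonneg_pos) auto
  then show ?thesis unfolding gain_def by (simp add: field_simps power2_eq_square)
qed

lemma a_bounds: assumes "p \<ge> 0" "D \<noteq> 0" shows "0 \<le> 1 - gain C D p * C" "1 - gain C D p * C \<le> 1"
proof -
  have d: "C^2 * p + D^2 > 0" using assms by (intro add_nonneg_pos) auto
  have "D^2 \<le> C^2 * p + D^2" using assms by simp
  then show "1 - gain C D p * C \<le> 1" unfolding a_eq[OF assms] using d by simp
  show "0 \<le> 1 - gain C D p * C" unfolding a_eq[OF assms] using d by simp
qed

context ekf begin

lemma detby_smean: "(\<And>i. i \<le> N \<Longrightarrow> detby K (\<lambda>\<omega>. f \<omega> i)) \<Longrightarrow> detby K (\<lambda>\<omega>. smean N (f \<omega>))"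
  unfolding smean_def by (intro detby_divide detby_sum detby_const) auto

lemma aa_bounds: "0 \<le> 1 - gg n \<omega> * C" "1 - gg n \<omega> * C \<le> 1"
  unfolding gg_def using a_bounds[OF pp_nonneg Dnz] by auto

lemma E_ph: "expectation (ph n) = expectation (\<lambda>\<omega>. (1 - gg n \<omega> * C)^2 * pp n \<omega> + D^2 * (gg n \<omega>)^2)"
proof -
  note [measurable] = meas_gg meas_pp
  define T1 where "T1 \<omega> = (1 - gg n \<omega> * C)^2 * pp n \<omega>" for \<omega>
  define G2 where "G2 \<omega> = (gg n \<omega>)^2" for \<omega>
  define SV where "SV \<omega> = svar N (vv n \<omega>)" for \<omega>
  define h where "h i \<omega> = (1 - gg n \<omega> * C) * gg n \<omega> * (xx n \<omega> i - smean N (xx n \<omega>))" for i \<omega>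
  have iT1: "integrable M T1"
  proof (rule int_bound[OF int_pp])
    show "T1 \<in> borel_measurable M" unfolding T1_def by measurable
    fix \<omega> have "(1 - gg n \<omega> * C)^2 \<le> 1" using aa_bounds[of n \<omega>] by (simp add: power_le_one)
    then have "(1 - gg n \<omega> * C)^2 * pp n \<omega> \<le> 1 * pp n \<omega>" using pp_nonneg by (intro mult_right_mono) auto
    then show "\<bar>T1 \<omega>\<bar> \<le> \<bar>pp n \<omega>\<bar>" unfolding T1_def using pp_nonneg[of n \<omega>] by simp
  qed
  have iG2: "integrable M G2"
  proof (rule int_bound[OF integrable_const[of "(1/\<bar>C\<bar>)^2"]])
    show "G2 \<in> borel_measurable M" unfolding G2_def by measurable
    fix \<omega> have "\<bar>gg n \<omega>\<bar>^2 \<le> (1/\<bar>C\<bar>)^2" using gg_bound by (intro power_mono) auto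
    then show "\<bar>G2 \<omega>\<bar> \<le> \<bar>(1/\<bar>C\<bar>)^2\<bar>" unfolding G2_def by simp
  qed
  have iSV: "integrable M SV" unfolding SV_def by (rule int_svar[OF sqi_vv])
  have dG2: "detby (Kx n) G2" unfolding G2_def by (intro detby_power detby_gg)
  have dSV: "detby (Lv n) SV" unfolding SV_def
    by (intro detby_svar, rule detby_rv'[of "LVp _ n"]) (auto simp: Lv_def vv_def fun_eq_iff)
  have indV: "integrable M (\<lambda>\<omega>. G2 \<omega> * SV \<omega>) \<and> expectation (\<lambda>\<omega>. G2 \<omega> * SV \<omega>) = expectation G2 * expectation SV"
    by (rule detby_indep[OF Kx_Lv Kx_sub Lv_sub dG2 iG2 dSV iSV])
  have eSV: "expectation SV = 1" unfolding SV_def by (rule E_svar_vv)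
  have hi: "\<And>i. i \<le> N \<Longrightarrow> integrable M (\<lambda>\<omega>. h i \<omega> * vv n \<omega> i) \<and> expectation (\<lambda>\<omega>. h i \<omega> * vv n \<omega> i) = 0"
  proof -
    fix i assume i: "i \<le> N"
    have dh: "detby (Kx n) (h i)" unfolding h_def
      by (intro detby_mult detby_diff detby_const detby_gg detby_xx detby_smean i)
    have sh: "sqi (h i)" unfolding h_def
    proof (rule sqi_bmult)
      show "(\<lambda>\<omega>. (1 - gg n \<omega> * C) * gg n \<omega>) \<in> borel_measurable M" by measurable
      fix \<omega> have "\<bar>(1 - gg n \<omega> * C) * gg n \<omega>\<bar> \<le> 1 * (1 / \<bar>C\<bar>)"
        unfolding abs_mult using aa_bounds[of n \<omega>] gg_bound[of n \<omega>] by (intro mult_mono) auto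
      then show "\<bar>(1 - gg n \<omega> * C) * gg n \<omega>\<bar> \<le> 1 / \<bar>C\<bar>" by simp
    qed (rule sqi_dev[OF sqi_xx i])
    have dv: "detby (Lv n) (\<lambda>\<omega>. vv n \<omega> i)"
      by (rule detby_rv'[of "LVp i n"]) (use i in \<open>auto simp: Lv_def vv_def fun_eq_iff\<close>)
    have iv: "integrable M (\<lambda>\<omega>. vv n \<omega> i)" by (rule sqi_int[OF sqi_vv[OF i]])
    have ev: "expectation (\<lambda>\<omega>. vv n \<omega> i) = 0" using std_moments(1)[OF dVp[OF i]] by (simp add: vv_def)
    show "integrable M (\<lambda>\<omega>. h i \<omega> * vv n \<omega> i) \<and> expectation (\<lambda>\<omega>. h i \<omega> * vv n \<omega> i) = 0"
      using detby_indep[OF Kx_Lv Kx_sub Lv_sub dh sqi_int[OF sh] dv iv] ev by simp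
  qed
  have eq: "\<And>\<omega>. ph n \<omega> = T1 \<omega> + D^2 * (G2 \<omega> * SV \<omega>) - (2 * D / real N) * (\<Sum>i\<le>N. h i \<omega> * vv n \<omega> i)"
    unfolding T1_def G2_def SV_def h_def by (rule ph_expand)
  have iS: "integrable M (\<lambda>\<omega>. \<Sum>i\<le>N. h i \<omega> * vv n \<omega> i)"
    using hi by (intro Bochner_Integration.integrable_sum) auto
  have eS: "expectation (\<lambda>\<omega>. \<Sum>i\<le>N. h i \<omega> * vv n \<omega> i) = 0"
    using hi by (subst Bochner_Integration.integral_sum) auto
  have "expectation (ph n) = expectation (\<lambda>\<omega>. T1 \<omega> + D^2 * (G2 \<omega> * SV \<omega>) - (2 * D / real N) * (\<Sum>i\<le>N. h i \<omega> * vv n \<omega> i))"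
    unfolding eq ..
  also have "\<dots> = expectation T1 + D^2 * expectation G2"
    using iT1 indV iS eS eSV by simp
  also have "\<dots> = expectation (\<lambda>\<omega>. T1 \<omega> + D^2 * G2 \<omega>)" using iT1 iG2 by simp
  finally show ?thesis unfolding T1_def G2_def .
qed

lemma E_pp_Suc: "expectation (pp (Suc n)) = A^2 * expectation (ph n) + B^2"
proof -
  define h where "h i \<omega> = xh n \<omega> i - smean N (xh n \<omega>)" for i \<omega>
  have hi: "\<And>i. i \<le> N \<Longrightarrow> integrable M (\<lambda>\<omega>. h i \<omega> * ww n \<omega> i) \<and> expectation (\<lambda>\<omega>. h i \<omega> * ww n \<omega> i) = 0"
  proof -
    fix i assume i: "i \<le> N"
    have dh: "detby (Kx n \<union> Lv n) (h i)" unfolding h_def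
      by (intro detby_diff detby_xh detby_smean i)
    have sh: "sqi (h i)" unfolding h_def by (rule sqi_dev[OF sqi_xh i])
    have dw: "detby (Lw n) (\<lambda>\<omega>. ww n \<omega> i)"
      by (rule detby_rv'[of "LWp i (Suc n)"]) (use i in \<open>auto simp: Lw_def ww_def fun_eq_iff\<close>)
    have iw: "integrable M (\<lambda>\<omega>. ww n \<omega> i)" by (rule sqi_int[OF sqi_ww[OF i]])
    have ew: "expectation (\<lambda>\<omega>. ww n \<omega> i) = 0" using std_moments(1)[OF dWp[OF i]] by (simp add: ww_def)
    show "integrable M (\<lambda>\<omega>. h i \<omega> * ww n \<omega> i) \<and> expectation (\<lambda>\<omega>. h i \<omega> * ww n \<omega> i) = 0"
      using detby_indep[OF Kh_Lw Kh_sub Lw_sub dh sqi_int[OF sh] dw iw] ew by simp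
  qed
  have iS: "integrable M (\<lambda>\<omega>. \<Sum>i\<le>N. h i \<omega> * ww n \<omega> i)"
    using hi by (intro Bochner_Integration.integrable_sum) auto
  have eS: "expectation (\<lambda>\<omega>. \<Sum>i\<le>N. h i \<omega> * ww n \<omega> i) = 0"
    using hi by (subst Bochner_Integration.integral_sum) auto
  have iW: "integrable M (\<lambda>\<omega>. svar N (ww n \<omega>))" by (rule int_svar[OF sqi_ww])
  have "expectation (pp (Suc n)) = expectation (\<lambda>\<omega>. A^2 * ph n \<omega> + B^2 * svar N (ww n \<omega>)
      + (2 * A * B / real N) * (\<Sum>i\<le>N. h i \<omega> * ww n \<omega> i))"
    unfolding h_def by (intro Bochner_Integration.integral_cong refl pp_Suc_expand)
  also have "\<dots> = A^2 * expectation (ph n) + B^2 * expectation (\<lambda>\<omega>. svar N (ww n \<omega>))"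
    using int_ph iW iS eS by simp
  finally show ?thesis using E_svar_ww by simp
qed

end


lemma tangent0: fixes s d p q X Y :: real assumes X: "X = s*p+d" and Y: "Y = s*q+d" and "X > 0" "Y > 0"
  shows "d*p/X = d*q/Y + d^2/Y^2 * (p-q) - s*d^2*(p-q)^2/(Y^2*X)"
proof -
  have "d*q/Y + d^2/Y^2 * (p-q) - s*d^2*(p-q)^2/(Y^2*X) = (d*q*Y*X + d^2*(p-q)*X - s*d^2*(p-q)^2)/(Y^2*X)"
    using assms(3,4) by (simp add: field_simps power2_eq_square)
  also have "d*q*Y*X + d^2*(p-q)*X - s*d^2*(p-q)^2 = d*p*Y^2" unfolding X Y by algebra
  also have "d*p*Y^2/(Y^2*X) = d*p/X" using assms(3,4) by simp
  finally show ?thesis by simp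
qed
lemma tangent: fixes C D p q :: real assumes "p \<ge> 0" "q \<ge> 0" "D \<noteq> 0"
  shows "D^2*p/(C^2*p+D^2) = D^2*q/(C^2*q+D^2) + (D^2)^2/(C^2*q+D^2)^2 * (p-q) - C^2*(D^2)^2*(p-q)^2/((C^2*q+D^2)^2*(C^2*p+D^2))"
proof -
  have a: "C^2*p+D^2 > 0" "C^2*q+D^2 > 0" using assms by (auto intro!: add_nonneg_pos)
  show ?thesis by (rule tangent0[OF refl refl a])
qed

lemma fK0: fixes X p C D :: real assumes "X > 0" "X = C^2*p+D^2"
  shows "(D^2/X)^2 * p + D^2*(C*p/X)^2 = D^2*p/X"
proof -
  have "(D^2/X)^2 * p + D^2*(C*p/X)^2 = (D^2*p*(D^2 + C^2*p))/X^2"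
    using assms(1) by (simp add: field_simps power2_eq_square)
  also have "\<dots> = (D^2*p*X)/X^2" using assms(2) by (simp add: algebra_simps)
  also have "\<dots> = D^2*p/X" using assms(1) by (simp add: power2_eq_square)
  finally show ?thesis .
qed

lemma fK_eq: fixes p :: real assumes "p \<ge> 0" "D \<noteq> 0"
  shows "(1 - gain C D p * C)^2 * p + D^2 * (gain C D p)^2 = D^2*p/(C^2*p+D^2)"
proof -
  have X: "C^2*p+D^2 > 0" using assms by (auto intro!: add_nonneg_pos)
  have e: "1 - gain C D p * C = D^2/(C^2*p+D^2)" by (rule a_eq[OF assms])
  show ?thesis unfolding e unfolding gain_def by (rule fK0[OF X refl])
qed

lemma fK_le: fixes p :: real assumes "p \<ge> 0" "D \<noteq> 0" shows "D^2*p/(C^2*p+D^2) \<le> p" "0 \<le> D^2*p/(C^2*p+D^2)"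
proof -
  have X: "C^2*p+D^2 > 0" using assms by (auto intro!: add_nonneg_pos)
  have "D^2*p \<le> (C^2*p+D^2) * p" using assms by (simp add: algebra_simps)
  then show "D^2*p/(C^2*p+D^2) \<le> p" using X by (simp add: divide_le_eq mult.commute)
  show "0 \<le> D^2*p/(C^2*p+D^2)" using X assms by simp
qed

context ekf begin

lemma kalP_pos: "kalP A B C D P0 n > 0"
proof (induction n)
  case 0 then show ?case using P0pos by simp
next
  case (Suc n)
  have "0 \<le> (1 - gain C D (kalP A B C D P0 n) * C)" using a_bounds(1)[OF _ Dnz] Suc by auto
  then have "0 \<le> A^2 * ((1 - gain C D (kalP A B C D P0 n) * C) * kalP A B C D P0 n)" using Suc by simp
  moreover have "B^2 > 0" using Bnz by simp
  ultimately show ?case unfolding kalP.simps by linarith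
qed

lemma kalPhat_eq: "kalPhat A B C D P0 n = D^2 * kalP A B C D P0 n / (C^2 * kalP A B C D P0 n + D^2)"
  unfolding kalPhat_def a_eq[OF less_imp_le[OF kalP_pos] Dnz] by simp

lemma kalP_Suc: "kalP A B C D P0 (Suc n) = A^2 * kalPhat A B C D P0 n + B^2"
  by (simp add: kalPhat_def)

definition "rr n \<omega> = C^2*(D^2)^2*(pp n \<omega> - kalP A B C D P0 n)^2/((C^2*kalP A B C D P0 n+D^2)^2*(C^2*pp n \<omega>+D^2))"

lemma rr_nonneg: "rr n \<omega> \<ge> 0"
proof -
  have "C^2*pp n \<omega>+D^2 > 0" using pp_nonneg Dnz by (auto intro!: add_nonneg_pos)
  then show ?thesis unfolding rr_def by simp
qed

lemma step:
  assumes le: "expectation (pp n) \<le> kalP A B C D P0 n"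
    and str: "expectation (pp n) < kalP A B C D P0 n \<or> expectation (rr n) > 0"
  shows "expectation (ph n) < kalPhat A B C D P0 n"
proof -
  define q where "q = kalP A B C D P0 n"
  have q: "q > 0" unfolding q_def by (rule kalP_pos)
  define fK where "fK p = D^2*p/(C^2*p+D^2)" for p
  define dK where "dK = (D^2)^2/(C^2*q+D^2)^2"
  have qX: "C^2*q+D^2 > 0" using q Dnz by (auto intro!: add_nonneg_pos)
  have dK: "dK > 0" unfolding dK_def using Dnz qX by simp
  note [measurable] = meas_pp
  have e1: "expectation (ph n) = expectation (\<lambda>\<omega>. fK (pp n \<omega>))"
    unfolding E_ph fK_def gg_def using fK_eq[OF pp_nonneg Dnz] by simp
  have ifK: "integrable M (\<lambda>\<omega>. fK (pp n \<omega>))"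
  proof (rule int_bound[OF int_pp])
    show "(\<lambda>\<omega>. fK (pp n \<omega>)) \<in> borel_measurable M" unfolding fK_def by measurable
    fix \<omega> show "\<bar>fK (pp n \<omega>)\<bar> \<le> \<bar>pp n \<omega>\<bar>" unfolding fK_def using fK_le[OF pp_nonneg Dnz, of n \<omega>] pp_nonneg[of n \<omega>] by simp
  qed
  have req: "\<And>\<omega>. rr n \<omega> = fK q + dK * (pp n \<omega> - q) - fK (pp n \<omega>)"
    unfolding rr_def fK_def dK_def q_def[symmetric] using tangent[OF pp_nonneg less_imp_le[OF q] Dnz] by simp
  have irr: "integrable M (rr n)" unfolding req[abs_def] using ifK int_pp by simp
  have err: "expectation (rr n) = fK q + dK * (expectation (pp n) - q) - expectation (\<lambda>\<omega>. fK (pp n \<omega>))"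
    unfolding req[abs_def] using ifK int_pp by (simp add: prob_space)
  have err0: "expectation (rr n) \<ge> 0" by (rule integral_nonneg_AE) (simp add: rr_nonneg)
  have "expectation (ph n) = fK q + dK * (expectation (pp n) - q) - expectation (rr n)" using e1 err by simp
  moreover have "dK * (expectation (pp n) - q) \<le> 0" using le dK unfolding q_def by (simp add: mult_nonneg_nonpos)
  moreover have "dK * (expectation (pp n) - q) < 0 \<or> expectation (rr n) > 0"
    using str dK unfolding q_def by (auto simp: mult_pos_neg)
  ultimately have "expectation (ph n) < fK q" using err0 by linarith
  then show ?thesis unfolding kalPhat_eq fK_def q_def by simp
qed

end


lemma sq_le_of_abs: "\<bar>a::real\<bar> \<le> \<delta> \<Longrightarrow> a^2 \<le> \<delta>^2"
  using power_mono[of "\<bar>a\<bar>" \<delta> 2] by simp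

lemma nd_lower: assumes "\<sigma> > 0" "\<bar>x - m\<bar> \<le> \<delta>"
  shows "normal_density m \<sigma> (m + \<delta>) \<le> normal_density m \<sigma> x"
proof -
  have "(x - m)^2 \<le> \<delta>^2" using assms(2) by (rule sq_le_of_abs)
  then have "-(\<delta>^2) / (2 * \<sigma>^2) \<le> -((x - m)^2) / (2 * \<sigma>^2)"
    using assms(1) by (intro divide_right_mono) auto
  then have "exp (-(\<delta>^2) / (2 * \<sigma>^2)) \<le> exp (-((x - m)^2) / (2 * \<sigma>^2))" by simp
  then show ?thesis unfolding normal_density_def by (intro mult_left_mono) auto
qed

context ekf begin

lemma int_rr: "integrable M (rr n)"
proof -
  define q where "q = kalP A B C D P0 n"
  have q: "q > 0" unfolding q_def by (rule kalP_pos)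
  define fK where "fK p = D^2*p/(C^2*p+D^2)" for p
  define dK where "dK = (D^2)^2/(C^2*q+D^2)^2"
  note [measurable] = meas_pp
  have ifK: "integrable M (\<lambda>\<omega>. fK (pp n \<omega>))"
  proof (rule int_bound[OF int_pp])
    show "(\<lambda>\<omega>. fK (pp n \<omega>)) \<in> borel_measurable M" unfolding fK_def by measurable
    fix \<omega> show "\<bar>fK (pp n \<omega>)\<bar> \<le> \<bar>pp n \<omega>\<bar>" unfolding fK_def using fK_le[OF pp_nonneg Dnz, of n \<omega>] pp_nonneg[of n \<omega>] by simp
  qed
  have req: "\<And>\<omega>. rr n \<omega> = fK q + dK * (pp n \<omega> - q) - fK (pp n \<omega>)"
    unfolding rr_def fK_def dK_def q_def[symmetric] using tangent[OF pp_nonneg less_imp_le[OF q] Dnz] by simp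
  show ?thesis unfolding req[abs_def] using ifK int_pp by simp
qed

lemma prob_xi0_pos: assumes i: "i \<le> N" and d: "\<delta> > 0"
  shows "prob (xi0 i -` {m0 - \<delta> <..< m0 + \<delta>} \<inter> space M) > 0"
proof -
  define \<sigma> where "\<sigma> = sqrt P0"
  have s: "\<sigma> > 0" unfolding \<sigma>_def using P0pos by simp
  define I where "I = {m0 - \<delta> <..< m0 + \<delta>}"
  define c1 where "c1 = normal_density m0 \<sigma> (m0 + \<delta>)"
  have c1: "c1 > 0" unfolding c1_def using normal_density_pos[OF s] .
  have "emeasure M (xi0 i -` I \<inter> space M) = (\<integral>\<^sup>+x. ennreal (normal_density m0 \<sigma> x) * indicator I x \<partial>lborel)"
    unfolding \<sigma>_def by (rule distributed_emeasure[OF dxi0[OF i]]) (simp add: I_def)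
  also have "\<dots> \<ge> (\<integral>\<^sup>+x. ennreal c1 * indicator I x \<partial>lborel)"
  proof (rule nn_integral_mono)
    fix x show "ennreal c1 * indicator I x \<le> ennreal (normal_density m0 \<sigma> x) * indicator I x"
    proof (cases "x \<in> I")
      case True
      then have "\<bar>x - m0\<bar> \<le> \<delta>" unfolding I_def by auto
      then have "c1 \<le> normal_density m0 \<sigma> x" unfolding c1_def by (rule nd_lower[OF s])
      then show ?thesis using True by (simp add: ennreal_leI)
    qed simp
  qed
  also have "(\<integral>\<^sup>+x. ennreal c1 * indicator I x \<partial>lborel) = ennreal c1 * ennreal (2 * \<delta>)"
    unfolding I_def using d by (subst nn_integral_cmult_indicator) auto
  finally have "ennreal (c1 * (2 * \<delta>)) \<le> ennreal (prob (xi0 i -` I \<inter> space M))"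
    using c1 d by (simp add: emeasure_eq_measure ennreal_mult)
  then have "c1 * (2 * \<delta>) \<le> prob (xi0 i -` I \<inter> space M)" by simp
  moreover have "c1 * (2 * \<delta>) > 0" using c1 d by simp
  ultimately show ?thesis unfolding I_def by linarith
qed

lemma rr0_pos': "expectation (rr 0) > 0"
proof -
  define \<delta> where "\<delta> = sqrt P0 / 2"
  have d: "\<delta> > 0" unfolding \<delta>_def using P0pos by simp
  have d2: "\<delta>^2 = P0 / 4" unfolding \<delta>_def using P0pos by (simp add: power_divide)
  define I where "I = {m0 - \<delta> <..< m0 + \<delta>}"
  define Ev where "Ev = (\<Inter>l\<in>LXi ` {..N}. rv l -` I \<inter> space M)"
  have Ev_sets: "Ev \<in> sets M" unfolding Ev_def
    by (intro sets.finite_INT measurable_sets[OF rv_meas]) (auto simp: labels_def I_def)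
  have Ev_mem: "\<And>\<omega>. \<omega> \<in> Ev \<Longrightarrow> \<omega> \<in> space M \<and> (\<forall>i\<le>N. xi0 i \<omega> \<in> I)"
    unfolding Ev_def by auto
  have pEv: "prob Ev = (\<Prod>l\<in>LXi ` {..N}. prob (rv l -` I \<inter> space M))"
    unfolding Ev_def by (rule indep_varsD[OF ind]) (auto simp: labels_def I_def)
  also have "\<dots> = (\<Prod>i\<le>N. prob (xi0 i -` I \<inter> space M))"
    by (subst prod.reindex) (auto simp: inj_on_def)
  finally have pEv': "prob Ev > 0"
    using prob_xi0_pos[OF _ d] unfolding I_def by (auto intro!: prod_pos)
  define q where "q = kalP A B C D P0 0"
  have q: "q = P0" unfolding q_def by simp
  define c0 where "c0 = C^2*(D^2)^2*(q/2)^2/((C^2*q+D^2)^2*(C^2*q+D^2))"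
  have qX: "C^2*q+D^2 > 0" using P0pos Dnz q by (auto intro!: add_nonneg_pos)
  have c0: "c0 > 0" unfolding c0_def using qX Cnz Dnz q P0pos by simp
  have bnd: "\<And>\<omega>. \<omega> \<in> space M \<Longrightarrow> c0 * indicator Ev \<omega> \<le> rr 0 \<omega>"
  proof -
    fix \<omega> assume "\<omega> \<in> space M"
    show "c0 * indicator Ev \<omega> \<le> rr 0 \<omega>"
    proof (cases "\<omega> \<in> Ev")
      case False then show ?thesis using rr_nonneg by simp
    next
      case True
      then have xi: "\<And>i. i \<le> N \<Longrightarrow> (xi0 i \<omega> - m0)^2 \<le> \<delta>^2"
      proof -
        fix i assume "i \<le> N"
        then have "xi0 i \<omega> \<in> I" using Ev_mem[OF True] by blast
        then have "\<bar>xi0 i \<omega> - m0\<bar> \<le> \<delta>" unfolding I_def by auto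
        then show "(xi0 i \<omega> - m0)^2 \<le> \<delta>^2" by (rule sq_le_of_abs)
      qed
      have "pp 0 \<omega> \<le> (\<Sum>i\<le>N. (xi0 i \<omega> - m0)^2) / real N"
        unfolding pp_def using svar_le[of N "xx 0 \<omega>" m0] by (simp add: xx_0)
      also have "(\<Sum>i\<le>N. (xi0 i \<omega> - m0)^2) \<le> real (N+1) * \<delta>^2"
        using sum_bounded_above[of "{..N}" "\<lambda>i. (xi0 i \<omega> - m0)^2" "\<delta>^2"] xi by simp
      then have "(\<Sum>i\<le>N. (xi0 i \<omega> - m0)^2) / real N \<le> real (N+1) * \<delta>^2 / real N"
        by (intro divide_right_mono) auto
      also have "real (N+1) * \<delta>^2 / real N \<le> P0 / 2"
      proof -
        have "real (N+1) \<le> 2 * real N" using N1 by simp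
        then have "real (N+1) * (P0/4) \<le> 2 * real N * (P0/4)" using P0pos by (intro mult_right_mono) auto
        then show ?thesis unfolding d2 using N1 by (simp add: divide_le_eq)
      qed
      finally have p2: "pp 0 \<omega> \<le> q / 2" unfolding q .
      have p0: "pp 0 \<omega> \<ge> 0" by (rule pp_nonneg)
      have "(q/2)^2 \<le> (pp 0 \<omega> - q)^2"
      proof -
        have "q/2 \<le> q - pp 0 \<omega>" using p2 by simp
        then have "(q/2)^2 \<le> (q - pp 0 \<omega>)^2" using q P0pos by (intro power_mono) auto
        then show ?thesis by (simp add: power2_commute)
      qed
      then have num: "C^2*(D^2)^2*(q/2)^2 \<le> C^2*(D^2)^2*(pp 0 \<omega> - q)^2" by (intro mult_left_mono) auto
      have den: "(C^2*q+D^2)^2*(C^2*pp 0 \<omega>+D^2) \<le> (C^2*q+D^2)^2*(C^2*q+D^2)"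
        using p2 q P0pos by (intro mult_left_mono add_right_mono) (auto intro!: mult_left_mono)
      have den0: "(C^2*q+D^2)^2*(C^2*pp 0 \<omega>+D^2) > 0" using qX p0 Dnz by (auto intro!: mult_pos_pos add_nonneg_pos)
      have "c0 \<le> rr 0 \<omega>" unfolding c0_def rr_def q_def[symmetric]
        by (rule frac_le[OF _ num den0 den]) simp
      then show ?thesis using True by simp
    qed
  qed
  have iI: "integrable M (indicator Ev :: 'a \<Rightarrow> real)"
    using Ev_sets by (intro integrable_real_indicator) (auto simp: emeasure_eq_measure)
  have "expectation (\<lambda>\<omega>. c0 * indicator Ev \<omega>) \<le> expectation (rr 0)"
    by (rule integral_mono[OF _ int_rr bnd]) (use iI in simp)
  moreover have "expectation (\<lambda>\<omega>. c0 * indicator Ev \<omega>) = c0 * prob Ev" using Ev_sets by simp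
  moreover have "c0 * prob Ev > 0" using c0 pEv' by simp
  ultimately show ?thesis by linarith
qed

lemma main_ind: "expectation (pp n) \<le> kalP A B C D P0 n \<and> expectation (ph n) < kalPhat A B C D P0 n"
proof (induction n)
  case 0
  have "expectation (pp 0) \<le> kalP A B C D P0 0" using E_pp0 by simp
  then show ?case using step[of 0] rr0_pos' by simp
next
  case (Suc n)
  have "expectation (pp (Suc n)) < kalP A B C D P0 (Suc n)"
    unfolding E_pp_Suc kalP_Suc using Suc Anz by simp
  then show ?case using step[of "Suc n"] by simp
qed


end

theorem mainTheorem19:
  fixes M :: "'a measure"
    and A B C D P0 m0 :: real and N n :: nat
    and X0 :: "'a \<Rightarrow> real" and W V xi0 :: "nat \<Rightarrow> 'a \<Rightarrow> real"
    and Vp Wp :: "nat \<Rightarrow> nat \<Rightarrow> 'a \<Rightarrow> real"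
  assumes "prob_space M"
    and "A \<noteq> 0" "B \<noteq> 0" "C \<noteq> 0" "D \<noteq> 0" "P0 > 0" "N \<ge> 1"
    and "distributed M lborel X0 (normal_density m0 (sqrt P0))"
    and "\<And>i. i \<le> N \<Longrightarrow> distributed M lborel (xi0 i) (normal_density m0 (sqrt P0))"
    and "\<And>k. distributed M lborel (W k) std_normal_density"
    and "\<And>k. distributed M lborel (V k) std_normal_density"
    and "\<And>i k. i \<le> N \<Longrightarrow> distributed M lborel (Wp i k) std_normal_density"
    and "\<And>i k. i \<le> N \<Longrightarrow> distributed M lborel (Vp i k) std_normal_density"
    and "prob_space.indep_vars M (\<lambda>_. borel) (rv_of X0 W V xi0 Vp Wp) (labels N)"
  shows "integrable M (enkf_phat A B C D N X0 W V xi0 Vp Wp n)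
       \<and> prob_space.expectation M (enkf_phat A B C D N X0 W V xi0 Vp Wp n) < kalPhat A B C D P0 n
       \<and> integrable M (enkf_p A B C D N X0 W V xi0 Vp Wp (Suc n))
       \<and> prob_space.expectation M (enkf_p A B C D N X0 W V xi0 Vp Wp (Suc n)) < kalP A B C D P0 (Suc n)"
proof -
  have E: "ekf M A B C D P0 m0 N X0 W V xi0 Vp Wp"
    unfolding ekf_def ekf_axioms_def using assms by auto
  interpret ekf M A B C D P0 m0 N X0 W V xi0 Vp Wp by (rule E)
  have e1: "enkf_phat A B C D N X0 W V xi0 Vp Wp n = ph n"
    by (simp add: fun_eq_iff enkf_phat_def ph_def xh_def YY_def vv_def xx_def)
  have e2: "enkf_p A B C D N X0 W V xi0 Vp Wp (Suc n) = pp (Suc n)"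
    by (simp add: fun_eq_iff enkf_p_def pp_def xx_def)
  have h: "expectation (ph n) < kalPhat A B C D P0 n" using main_ind by blast
  have "expectation (pp (Suc n)) < kalP A B C D P0 (Suc n)"
    unfolding E_pp_Suc kalP_Suc using h Anz by simp
  then show ?thesis unfolding e1 e2 using int_ph int_pp h by blast
qed

end
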